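(* Let $\mathcal{F}^*$ be one of $\mathcal{F}^c,\mathcal{F}^{ev},\mathcal{F}^o$, let $\kappa_0=\kappa(H_0,\lambda_0,\alpha_0)$ and $\kappa_1=\kappa(H_1,\lambda_1,\alpha_1)$ be nondegenerate quadratic functions in $\mathcal{F}^*$, and let $\theta:\mathrm{Cok}(\hat\lambda_0)\to\mathrm{Cok}(\hat\lambda_1)$ be an isometry of the induced quadratic linking families. Let $H=\{(x_0,x_1)\in H_0^*\oplus H_1^*:\theta([x_0])=[x_1]\}$ and define $\lambda:H\times H\to\mathbb{Q}$ by $\lambda((x_0,x_1),(y_0,y_1))=\lambda_0^{-1}(x_0,y_0)-\lambda_1^{-1}(x_1,y_1)$. Then: 1. $\lambda$ is a nonsingular integral symmetric bilinear form on the free abelian group $H$; 2. the map $H_0\oplus H_1\to H$, $(v_0,v_1)\mapsto(\hat\lambda_0(v_0),-\hat\lambda_1(v_1))$, is an isometric embedding of $\lambda_0\oplus(-\lambda_1)$ into $\lambda$; 3. $(\alpha_0,\alpha_1)\in H$; 4. with $\alpha:=\hat\lambda((\alpha_0,\alpha_1))$, the quadratic function $\kappa_0\cup_\theta\kappa_1^-:=\kappa(H,\lambda,\alpha)$ belongs to $\mathcal{F}^*$; 5. the map in 2 is an isometric embedding $\kappa_0\oplus\kappa_1^-\to\kappa_0\cup_\theta\kappa_1^-$.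
   Context: A quadratic function $\kappa(H,\lambda,\alpha)$: $H$ finitely generated free abelian, $\lambda$ symmetric bilinear into $\mathbb{Z}$, $\alpha\in H^*=\mathrm{Hom}(H,\mathbb{Z})$, $\kappa(v)=\lambda(v,v)+\alpha(v)$, adjoint $\hat\lambda:H\to H^*$; nondegenerate if $\hat\lambda$ injective, nonsingular if bijective; $\kappa^-=\kappa(H,-\lambda,\alpha)$. Families: $\mathcal{F}^c$ characteristic ($\lambda(v,v)+\alpha(v)$ even $\forall v$); $\mathcal{F}^{ev}$ with $\lambda$ even; $\mathcal{F}^o$ with $\lambda$ even and $\alpha=0$. For nondegenerate $\kappa_i$: $[x]$ denotes the class of $x\in H_i^*$ in the finite group $\mathrm{Cok}\,\hat\lambda_i$; $\lambda_i^{-1}(x,y)=y(v)/r$ where $rx=\hat\lambda_i(v)$, $r\ne0$; $q^{ev}(\kappa_i)([x])=\frac12\lambda_i^{-1}(x,x)\bmod\mathbb{Z}$ (used for $\mathcal{F}^{ev},\mathcal{F}^o$) and $q^c(\kappa_i)([x])=\frac12(\lambda_i^{-1}(x,x)+\lambda_i^{-1}(x,\alpha_i))\bmod\mathbb{Z}$ (for $\mathcal{F}^c$). An isometry of the induced quadratic linking families is a group isomorphism $\theta$ with $\theta([\alpha_0])=[\alpha_1]$ and $q^*(\kappa_1)\circ\theta=q^*(\kappa_0)$. Isometric embedding: injective homomorphism preserving the (quadratic or bilinear) forms. *)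

theory Defs
  imports Complex_Main
begin

text \<open>A finitely generated free abelian group of rank n is modelled as
  Z^n = vecs n (integer functions on nat supported in {..<n}); its dual Hom(Z^n,Z) is
  identified with Z^n via the standard pairing dot. A symmetric bilinear form is an
  integer matrix L (function nat => nat => int, only entries i,j < n matter).\<close>

datatype family = Fc | Fev | Fo

definition vecs :: "nat \<Rightarrow> (nat \<Rightarrow> int) set" where
  "vecs n = {v. \<forall>i\<ge>n. v i = 0}"

definition dot :: "nat \<Rightarrow> (nat \<Rightarrow> int) \<Rightarrow> (nat \<Rightarrow> int) \<Rightarrow> int" where
  "dot n x v = (\<Sum>i<n. x i * v i)"

definition bil :: "nat \<Rightarrow> (nat \<Rightarrow> nat \<Rightarrow> int) \<Rightarrow> (nat \<Rightarrow> int) \<Rightarrow> (nat \<Rightarrow> int) \<Rightarrow> int" where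
  "bil n L v w = (\<Sum>i<n. \<Sum>j<n. v i * L i j * w j)"

text \<open>adjoint lambda-hat : H -> H^*, as a vector under the identification above\<close>
definition adj :: "nat \<Rightarrow> (nat \<Rightarrow> nat \<Rightarrow> int) \<Rightarrow> (nat \<Rightarrow> int) \<Rightarrow> (nat \<Rightarrow> int)" where
  "adj n L v = (\<lambda>i. if i < n then (\<Sum>j<n. L i j * v j) else 0)"

definition symm :: "nat \<Rightarrow> (nat \<Rightarrow> nat \<Rightarrow> int) \<Rightarrow> bool" where
  "symm n L \<longleftrightarrow> (\<forall>i<n. \<forall>j<n. L i j = L j i)"

definition quadfun :: "nat \<Rightarrow> (nat \<Rightarrow> nat \<Rightarrow> int) \<Rightarrow> (nat \<Rightarrow> int) \<Rightarrow> bool" where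
  "quadfun n L a \<longleftrightarrow> symm n L \<and> a \<in> vecs n"

definition nondeg :: "nat \<Rightarrow> (nat \<Rightarrow> nat \<Rightarrow> int) \<Rightarrow> bool" where
  "nondeg n L \<longleftrightarrow> inj_on (adj n L) (vecs n)"

definition in_fam :: "family \<Rightarrow> nat \<Rightarrow> (nat \<Rightarrow> nat \<Rightarrow> int) \<Rightarrow> (nat \<Rightarrow> int) \<Rightarrow> bool" where
  "in_fam F n L a \<longleftrightarrow>
     (case F of
        Fc \<Rightarrow> (\<forall>v\<in>vecs n. even (bil n L v v + dot n a v))
      | Fev \<Rightarrow> (\<forall>v\<in>vecs n. even (bil n L v v))
      | Fo \<Rightarrow> (\<forall>v\<in>vecs n. even (bil n L v v)) \<and> (\<forall>i. a i = 0))"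

definition cls :: "nat \<Rightarrow> (nat \<Rightarrow> nat \<Rightarrow> int) \<Rightarrow> (nat \<Rightarrow> int) \<Rightarrow> (nat \<Rightarrow> int) set" where
  "cls n L x = {y. \<exists>v\<in>vecs n. y = (\<lambda>i. x i + adj n L v i)}"

definition Cok :: "nat \<Rightarrow> (nat \<Rightarrow> nat \<Rightarrow> int) \<Rightarrow> (nat \<Rightarrow> int) set set" where
  "Cok n L = cls n L ` vecs n"

definition linv :: "nat \<Rightarrow> (nat \<Rightarrow> nat \<Rightarrow> int) \<Rightarrow> (nat \<Rightarrow> int) \<Rightarrow> (nat \<Rightarrow> int) \<Rightarrow> rat" where
  "linv n L x y = (SOME q. \<exists>r v. r \<noteq> 0 \<and> v \<in> vecs n \<and> (\<lambda>i. r * x i) = adj n L v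
                                 \<and> q = of_int (dot n y v) / of_int r)"

text \<open>values in Q/Z are represented by their fractional part in [0,1)\<close>
definition qev :: "nat \<Rightarrow> (nat \<Rightarrow> nat \<Rightarrow> int) \<Rightarrow> (nat \<Rightarrow> int) \<Rightarrow> rat" where
  "qev n L x = frac (linv n L x x / 2)"

definition qc :: "nat \<Rightarrow> (nat \<Rightarrow> nat \<Rightarrow> int) \<Rightarrow> (nat \<Rightarrow> int) \<Rightarrow> (nat \<Rightarrow> int) \<Rightarrow> rat" where
  "qc n L a x = frac ((linv n L x x + linv n L x a) / 2)"

definition qstar :: "family \<Rightarrow> nat \<Rightarrow> (nat \<Rightarrow> nat \<Rightarrow> int) \<Rightarrow> (nat \<Rightarrow> int) \<Rightarrow> (nat \<Rightarrow> int) set \<Rightarrow> rat" where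
  "qstar F n L a c = (let x = (SOME x. x \<in> c) in if F = Fc then qc n L a x else qev n L x)"

text \<open>isometry of the induced quadratic linking families: group isomorphism
  Cok_0 -> Cok_1 (addition of classes = Minkowski sum of cosets) with
  theta([alpha_0]) = [alpha_1] and q^*(kappa_1) o theta = q^*(kappa_0)\<close>
definition linking_iso ::
  "family \<Rightarrow> nat \<Rightarrow> (nat \<Rightarrow> nat \<Rightarrow> int) \<Rightarrow> (nat \<Rightarrow> int) \<Rightarrow> nat \<Rightarrow> (nat \<Rightarrow> nat \<Rightarrow> int) \<Rightarrow> (nat \<Rightarrow> int)
     \<Rightarrow> ((nat \<Rightarrow> int) set \<Rightarrow> (nat \<Rightarrow> int) set) \<Rightarrow> bool" where
  "linking_iso F n0 L0 a0 n1 L1 a1 \<theta> \<longleftrightarrow>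
     bij_betw \<theta> (Cok n0 L0) (Cok n1 L1)
   \<and> (\<forall>x\<in>vecs n0. \<forall>y\<in>vecs n0.
        \<theta> (cls n0 L0 (\<lambda>i. x i + y i)) = {(\<lambda>i. u i + w i) | u w. u \<in> \<theta> (cls n0 L0 x) \<and> w \<in> \<theta> (cls n0 L0 y)})
   \<and> \<theta> (cls n0 L0 a0) = cls n1 L1 a1
   \<and> (\<forall>c\<in>Cok n0 L0. qstar F n1 L1 a1 (\<theta> c) = qstar F n0 L0 a0 c)"

type_synonym pvec = "(nat \<Rightarrow> int) \<times> (nat \<Rightarrow> int)"

definition padd :: "pvec \<Rightarrow> pvec \<Rightarrow> pvec" where
  "padd p q = ((\<lambda>i. fst p i + fst q i), (\<lambda>i. snd p i + snd q i))"

definition pneg :: "pvec \<Rightarrow> pvec" where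
  "pneg p = ((\<lambda>i. - fst p i), (\<lambda>i. - snd p i))"

definition glueH ::
  "nat \<Rightarrow> (nat \<Rightarrow> nat \<Rightarrow> int) \<Rightarrow> nat \<Rightarrow> (nat \<Rightarrow> nat \<Rightarrow> int)
     \<Rightarrow> ((nat \<Rightarrow> int) set \<Rightarrow> (nat \<Rightarrow> int) set) \<Rightarrow> pvec set" where
  "glueH n0 L0 n1 L1 \<theta> = {(x0, x1). x0 \<in> vecs n0 \<and> x1 \<in> vecs n1 \<and> \<theta> (cls n0 L0 x0) = cls n1 L1 x1}"

definition glue_lam ::
  "nat \<Rightarrow> (nat \<Rightarrow> nat \<Rightarrow> int) \<Rightarrow> nat \<Rightarrow> (nat \<Rightarrow> nat \<Rightarrow> int) \<Rightarrow> pvec \<Rightarrow> pvec \<Rightarrow> rat" where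
  "glue_lam n0 L0 n1 L1 x y = linv n0 L0 (fst x) (fst y) - linv n1 L1 (snd x) (snd y)"

definition emb :: "nat \<Rightarrow> (nat \<Rightarrow> nat \<Rightarrow> int) \<Rightarrow> nat \<Rightarrow> (nat \<Rightarrow> nat \<Rightarrow> int) \<Rightarrow> pvec \<Rightarrow> pvec" where
  "emb n0 L0 n1 L1 v = (adj n0 L0 (fst v), (\<lambda>i. - adj n1 L1 (snd v) i))"

definition free_fg :: "pvec set \<Rightarrow> bool" where
  "free_fg H \<longleftrightarrow> (\<exists>k b. (\<forall>i<k. b i \<in> H) \<and>
      (\<forall>h\<in>H. \<exists>!c::nat \<Rightarrow> int. (\<forall>i\<ge>k. c i = 0) \<and>
          h = ((\<lambda>j. \<Sum>i<k. c i * fst (b i) j), (\<lambda>j. \<Sum>i<k. c i * snd (b i) j))))"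

definition in_famQ :: "family \<Rightarrow> pvec set \<Rightarrow> (pvec \<Rightarrow> pvec \<Rightarrow> rat) \<Rightarrow> (pvec \<Rightarrow> rat) \<Rightarrow> bool" where
  "in_famQ F H lam alpha \<longleftrightarrow>
     (case F of
        Fc \<Rightarrow> (\<forall>v\<in>H. (lam v v + alpha v) / 2 \<in> \<int>)
      | Fev \<Rightarrow> (\<forall>v\<in>H. lam v v / 2 \<in> \<int>)
      | Fo \<Rightarrow> (\<forall>v\<in>H. lam v v / 2 \<in> \<int>) \<and> (\<forall>v\<in>H. alpha v = 0))"

end

theory Submission
  imports Defs Jordan_Normal_Form.Determinant
begin


lemma adj_inj: "nondeg n L \<Longrightarrow> v \<in> vecs n \<Longrightarrow> w \<in> vecs n \<Longrightarrow> adj n L v = adj n L w \<Longrightarrow> v = w"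
  unfolding nondeg_def inj_on_def by blast

lemma adj_vecs[simp]: "adj n L v \<in> vecs n"
  by (simp add: adj_def vecs_def)

lemma zero_vecs[simp]: "(\<lambda>i. 0) \<in> vecs n" by (simp add: vecs_def)

lemma adj_zero[simp]: "adj n L (\<lambda>i. 0) = (\<lambda>i. 0)"
  by (simp add: adj_def fun_eq_iff)

lemma sum_delta_helper: "(i::nat) < n \<Longrightarrow> (\<Sum>ia = 0..<n. (c::int) * (if ia = i then 1 else 0) * f ia) = c * f i"
proof -
  assume i: "i < n"
  have "(\<Sum>ia = 0..<n. c * (if ia = i then 1 else 0) * f ia) = (\<Sum>ia = 0..<n. if ia = i then c * f ia else 0)"
    by (rule sum.cong) auto
  also have "\<dots> = c * f i" using i by (simp add: sum.delta)
  finally show ?thesis .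
qed

lemma exists_wit:
  assumes nd: "nondeg n L" and x: "x \<in> vecs n"
  shows "\<exists>r v. r \<noteq> 0 \<and> v \<in> vecs n \<and> (\<lambda>i. r * x i) = adj n L v"
proof -
  define A where "A = mat n n (\<lambda>(i,j). L i j)"
  have A: "A \<in> carrier_mat n n" by (simp add: A_def)
  have d: "det A \<noteq> 0"
  proof
    assume "det A = 0"
    then obtain w where w: "w \<in> carrier_vec n" "w \<noteq> 0\<^sub>v n" "A *\<^sub>v w = 0\<^sub>v n"
      using det_0_iff_vec_prod_zero[OF A] by blast
    define v where "v = (\<lambda>i. if i < n then w $ i else 0)"
    have vv: "v \<in> vecs n" by (simp add: v_def vecs_def)
    have "adj n L v = adj n L (\<lambda>i. 0)"
    proof
      fix i
      show "adj n L v i = adj n L (\<lambda>i. 0) i"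
      proof (cases "i < n")
        case True
        have "(A *\<^sub>v w) $ i = 0" using w True by simp
        moreover have "(A *\<^sub>v w) $ i = (\<Sum>j<n. L i j * v j)"
          using True w(1) by (simp add: A_def scalar_prod_def v_def row_def lessThan_atLeast0)
        ultimately show ?thesis using True by (simp add: adj_def fun_eq_iff)
      qed (simp add: adj_def)
    qed
    then have "v = (\<lambda>i. 0)" using adj_inj[OF nd vv] by simp
    then have "w = 0\<^sub>v n" using w(1)
      by (intro eq_vecI) (auto simp: v_def fun_eq_iff, metis)
    then show False using w by simp
  qed
  define B where "B = adj_mat A"
  have B: "B \<in> carrier_mat n n" "A * B = det A \<cdot>\<^sub>m 1\<^sub>m n" using adj_mat[OF A] by (auto simp: B_def)
  define xv where "xv = vec n x"
  define u where "u = B *\<^sub>v xv"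
  have u: "u \<in> carrier_vec n" using B by (simp add: u_def xv_def)
  have Au: "A *\<^sub>v u = det A \<cdot>\<^sub>v xv"
  proof -
    have xv: "xv \<in> carrier_vec n" by (simp add: xv_def)
    have "A *\<^sub>v u = (A * B) *\<^sub>v xv" unfolding u_def using A B(1) xv by simp
    also have "\<dots> = (det A \<cdot>\<^sub>m 1\<^sub>m n) *\<^sub>v xv" using B by simp
    also have "\<dots> = det A \<cdot>\<^sub>v xv" using xv by (intro eq_vecI) (auto simp: scalar_prod_def sum_delta_helper)
    finally show ?thesis .
  qed
  define v where "v = (\<lambda>i. if i < n then u $ i else 0)"
  have vv: "v \<in> vecs n" by (simp add: v_def vecs_def)
  have "(\<lambda>i. det A * x i) = adj n L v"
  proof
    fix i
    show "det A * x i = adj n L v i"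
    proof (cases "i < n")
      case True
      have "(A *\<^sub>v u) $ i = det A * x i" using Au True by (simp add: xv_def)
      moreover have "(A *\<^sub>v u) $ i = (\<Sum>j<n. L i j * v j)"
        using True u by (simp add: A_def scalar_prod_def v_def row_def lessThan_atLeast0)
      ultimately show ?thesis using True by (simp add: adj_def fun_eq_iff)
    next
      case False then show ?thesis using x by (simp add: adj_def vecs_def)
    qed
  qed
  then show ?thesis using d vv by blast
qed

lemma dot_add1: "dot n (\<lambda>i. x i + y i) v = dot n x v + dot n y v"
  by (simp add: dot_def algebra_simps sum.distrib)
lemma dot_add2: "dot n x (\<lambda>i. v i + w i) = dot n x v + dot n x w"
  by (simp add: dot_def algebra_simps sum.distrib)
lemma dot_smul1: "dot n (\<lambda>i. c * x i) v = c * dot n x v"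
  by (simp add: dot_def algebra_simps sum_distrib_left)
lemma dot_smul2: "dot n x (\<lambda>i. c * v i) = c * dot n x v"
  by (simp add: dot_def algebra_simps sum_distrib_left)
lemma dot_neg1: "dot n (\<lambda>i. - x i) v = - dot n x v"
  by (simp add: dot_def sum_negf)
lemma dot_neg2: "dot n x (\<lambda>i. - v i) = - dot n x v"
  by (simp add: dot_def sum_negf)
lemma dot_comm: "dot n x v = dot n v x"
  by (simp add: dot_def mult.commute)
lemma dot_zero1[simp]: "dot n (\<lambda>i. 0) v = 0" by (simp add: dot_def)
lemma dot_zero2[simp]: "dot n v (\<lambda>i. 0) = 0" by (simp add: dot_def)
lemma dot_delta1: "j < n \<Longrightarrow> dot n (\<lambda>i. if i = j then 1 else 0) v = v j"
proof -
  assume j: "j < n"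
  have "dot n (\<lambda>i. if i = j then 1 else 0) v = (\<Sum>i<n. if i = j then v i else 0)"
    unfolding dot_def by (rule sum.cong) auto
  then show ?thesis using j by simp
qed
lemma dot_delta2: "j < n \<Longrightarrow> dot n v (\<lambda>i. if i = j then 1 else 0) = v j"
  using dot_delta1 dot_comm by metis

lemma adj_add: "adj n L (\<lambda>i. v i + w i) = (\<lambda>i. adj n L v i + adj n L w i)"
  by (simp add: adj_def fun_eq_iff algebra_simps sum.distrib)
lemma adj_smul: "adj n L (\<lambda>i. c * v i) = (\<lambda>i. c * adj n L v i)"
  by (simp add: adj_def fun_eq_iff algebra_simps sum_distrib_left)
lemma adj_neg: "adj n L (\<lambda>i. - v i) = (\<lambda>i. - adj n L v i)"
  by (simp add: adj_def fun_eq_iff sum_negf)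

lemma adj_diff: "adj n L (\<lambda>i. v i - w i) = (\<lambda>i. adj n L v i - adj n L w i)"
  by (simp add: adj_def fun_eq_iff sum_subtractf algebra_simps)

lemma bil_dot: "bil n L v w = dot n (adj n L w) v"
  by (simp add: bil_def dot_def adj_def sum_distrib_left algebra_simps)

lemma dot_adj_sym: assumes "symm n L" shows "dot n (adj n L v) w = dot n (adj n L w) v"
proof -
  have "dot n (adj n L v) w = (\<Sum>i<n. \<Sum>j<n. L i j * v j * w i)"
    by (simp add: dot_def adj_def sum_distrib_right)
  also have "\<dots> = (\<Sum>j<n. \<Sum>i<n. L i j * v j * w i)" by (rule sum.swap)
  also have "\<dots> = (\<Sum>j<n. \<Sum>i<n. L j i * w i * v j)"
    using assms unfolding symm_def by (intro sum.cong refl) (auto simp: algebra_simps)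
  also have "\<dots> = dot n (adj n L w) v"
    by (simp add: dot_def adj_def sum_distrib_right)
  finally show ?thesis .
qed

lemma vecs_add[simp]: "x \<in> vecs n \<Longrightarrow> y \<in> vecs n \<Longrightarrow> (\<lambda>i. x i + y i) \<in> vecs n"
  by (simp add: vecs_def)
lemma vecs_smul[simp]: "x \<in> vecs n \<Longrightarrow> (\<lambda>i. c * x i) \<in> vecs n"
  by (simp add: vecs_def)
lemma vecs_neg[simp]: "x \<in> vecs n \<Longrightarrow> (\<lambda>i. - x i) \<in> vecs n"
  by (simp add: vecs_def)
lemma vecs_delta[simp]: "j < n \<Longrightarrow> (\<lambda>i. if i = j then 1 else 0) \<in> vecs n"
  by (simp add: vecs_def)

lemma linv_char:
  assumes nd: "nondeg n L" and r: "r \<noteq> 0" and v: "v \<in> vecs n" and e: "(\<lambda>i. r * x i) = adj n L v"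
  shows "linv n L x y = of_int (dot n y v) / of_int r"
proof -
  let ?P = "\<lambda>q. \<exists>r v. r \<noteq> 0 \<and> v \<in> vecs n \<and> (\<lambda>i. r * x i) = adj n L v
                                 \<and> q = of_int (dot n y v) / (of_int r :: rat)"
  have "?P (of_int (dot n y v) / of_int r)" using r v e by blast
  then have "?P (linv n L x y)" unfolding linv_def by (rule someI)
  then obtain r' v' where r': "r' \<noteq> 0" "v' \<in> vecs n" "(\<lambda>i. r' * x i) = adj n L v'"
     and q: "linv n L x y = of_int (dot n y v') / of_int r'" by blast
  have "adj n L (\<lambda>i. r' * v i) = adj n L (\<lambda>i. r * v' i)"
  proof -
    have "adj n L (\<lambda>i. r' * v i) = (\<lambda>i. r' * (r * x i))" using e by (simp add: adj_smul) (metis)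
    also have "\<dots> = (\<lambda>i. r * (r' * x i))" by (simp add: algebra_simps)
    also have "\<dots> = adj n L (\<lambda>i. r * v' i)" using r'(3) by (simp add: adj_smul) (metis)
    finally show ?thesis .
  qed
  then have "(\<lambda>i. r' * v i) = (\<lambda>i. r * v' i)" using adj_inj[OF nd] v r'(2) by simp
  then have "dot n y (\<lambda>i. r' * v i) = dot n y (\<lambda>i. r * v' i)" by simp
  then have "r' * dot n y v = r * dot n y v'" by (simp add: dot_smul2)
  then have "of_int r' * of_int (dot n y v) = (of_int r * of_int (dot n y v') :: rat)"
    by (metis of_int_mult)
  moreover have "of_int r' * linv n L x y = of_int (dot n y v')" using q r'(1) by simp
  ultimately have "of_int r' * (of_int r * linv n L x y) = of_int r' * (of_int (dot n y v) :: rat)"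
    by (metis mult.left_commute)
  then have "of_int r * linv n L x y = (of_int (dot n y v) :: rat)" using r'(1) by simp
  then show ?thesis using r by (simp add: field_simps)
qed

lemma linv_wit:
  assumes nd: "nondeg n L" and x: "x \<in> vecs n"
  shows "\<exists>r v. r \<noteq> 0 \<and> v \<in> vecs n \<and> (\<lambda>i. r * x i) = adj n L v \<and> (\<forall>y. linv n L x y = of_int (dot n y v) / of_int r)"
  using exists_wit[OF nd x] linv_char[OF nd] by metis

lemma linv_add1:
  assumes nd: "nondeg n L" and x: "x \<in> vecs n" and x': "x' \<in> vecs n"
  shows "linv n L (\<lambda>i. x i + x' i) y = linv n L x y + linv n L x' y"
proof -
  obtain r v where w: "r \<noteq> 0" "v \<in> vecs n" "(\<lambda>i. r * x i) = adj n L v" "\<forall>y. linv n L x y = of_int (dot n y v) / of_int r"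
    using linv_wit[OF nd x] by blast
  obtain r' v' where w': "r' \<noteq> 0" "v' \<in> vecs n" "(\<lambda>i. r' * x' i) = adj n L v'" "\<forall>y. linv n L x' y = of_int (dot n y v') / of_int r'"
    using linv_wit[OF nd x'] by blast
  have e: "(\<lambda>i. (r * r') * (x i + x' i)) = adj n L (\<lambda>i. r' * v i + r * v' i)"
  proof -
    have "(\<lambda>i. (r * r') * (x i + x' i)) = (\<lambda>i. r' * (r * x i) + r * (r' * x' i))" by (simp add: algebra_simps)
    also have "\<dots> = (\<lambda>i. r' * adj n L v i + r * adj n L v' i)" using w(3) w'(3) by (metis (no_types))
    also have "\<dots> = adj n L (\<lambda>i. r' * v i + r * v' i)" by (simp add: adj_add adj_smul)
    finally show ?thesis .
  qed
  have "linv n L (\<lambda>i. x i + x' i) y = of_int (dot n y (\<lambda>i. r' * v i + r * v' i)) / of_int (r * r')"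
    by (rule linv_char[OF nd _ _ e]) (use w w' in auto)
  also have "\<dots> = (of_int r' * of_int (dot n y v) + of_int r * of_int (dot n y v')) / (of_int r * of_int r')"
    by (simp add: dot_add2 dot_smul2)
  also have "\<dots> = linv n L x y + linv n L x' y" using w w' by (simp add: field_simps)
  finally show ?thesis .
qed

lemma linv_add2:
  assumes nd: "nondeg n L" and x: "x \<in> vecs n"
  shows "linv n L x (\<lambda>i. y i + y' i) = linv n L x y + linv n L x y'"
  using linv_wit[OF nd x] by (auto simp: dot_add1 add_divide_distrib)

lemma linv_smul2:
  assumes nd: "nondeg n L" and x: "x \<in> vecs n"
  shows "linv n L x (\<lambda>i. c * y i) = of_int c * linv n L x y"
  using linv_wit[OF nd x] by (auto simp: dot_smul1)

lemma linv_neg2: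
  assumes nd: "nondeg n L" and x: "x \<in> vecs n"
  shows "linv n L x (\<lambda>i. - y i) = - linv n L x y"
  using linv_wit[OF nd x] by (auto simp: dot_neg1)

lemma linv_zero1:
  assumes nd: "nondeg n L" shows "linv n L (\<lambda>i. 0) y = 0"
  using linv_char[OF nd, of 1 "\<lambda>i. 0" "\<lambda>i. 0" y] by simp

lemma linv_neg1:
  assumes nd: "nondeg n L" and x: "x \<in> vecs n"
  shows "linv n L (\<lambda>i. - x i) y = - linv n L x y"
proof -
  have "linv n L (\<lambda>i. x i + - x i) y = linv n L x y + linv n L (\<lambda>i. - x i) y"
    by (rule linv_add1[OF nd x]) (use x in simp)
  then show ?thesis using linv_zero1[OF nd] by simp
qed

lemma linv_diff1:
  assumes nd: "nondeg n L" and x: "x \<in> vecs n" and x': "x' \<in> vecs n"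
  shows "linv n L (\<lambda>i. x i - x' i) y = linv n L x y - linv n L x' y"
  using linv_add1[OF nd x vecs_neg[OF x'], of y] linv_neg1[OF nd x', of y] by simp

lemma linv_adj1:
  assumes nd: "nondeg n L" and v: "v \<in> vecs n"
  shows "linv n L (adj n L v) y = of_int (dot n y v)"
  using linv_char[OF nd, of 1 v "adj n L v" y] v by simp

lemma linv_adj2:
  assumes nd: "nondeg n L" and s: "symm n L" and x: "x \<in> vecs n"
  shows "linv n L x (adj n L w) = of_int (dot n x w)"
proof -
  obtain r v where w: "r \<noteq> 0" "v \<in> vecs n" "(\<lambda>i. r * x i) = adj n L v" "\<forall>y. linv n L x y = of_int (dot n y v) / of_int r"
    using linv_wit[OF nd x] by blast
  have "dot n (adj n L w) v = dot n (adj n L v) w" by (rule dot_adj_sym[OF s])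
  also have "\<dots> = r * dot n x w" using w(3)[symmetric] by (simp add: dot_smul1)
  finally show ?thesis using w by simp
qed

lemma linv_sym:
  assumes nd: "nondeg n L" and s: "symm n L" and x: "x \<in> vecs n" and y: "y \<in> vecs n"
  shows "linv n L x y = linv n L y x"
proof -
  obtain r v where w: "r \<noteq> 0" "v \<in> vecs n" "(\<lambda>i. r * x i) = adj n L v" "\<forall>y. linv n L x y = of_int (dot n y v) / of_int r"
    using linv_wit[OF nd x] by blast
  obtain r' v' where w': "r' \<noteq> 0" "v' \<in> vecs n" "(\<lambda>i. r' * y i) = adj n L v'" "\<forall>z. linv n L y z = of_int (dot n z v') / of_int r'"
    using linv_wit[OF nd y] by blast
  have "r' * dot n y v = dot n (adj n L v') v" using w'(3)[symmetric] by (simp add: dot_smul1)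
  also have "\<dots> = dot n (adj n L v) v'" by (rule dot_adj_sym[OF s])
  also have "\<dots> = r * dot n x v'" using w(3)[symmetric] by (simp add: dot_smul1)
  finally have e: "of_int r' * of_int (dot n y v) = (of_int r * of_int (dot n x v') :: rat)" by (metis of_int_mult)
  have "linv n L x y = of_int (dot n y v) / of_int r" using w by simp
  also have "\<dots> = of_int (dot n x v') / of_int r'" using e w(1) w'(1) by (simp add: field_simps)
  also have "\<dots> = linv n L y x" using w' by simp
  finally show ?thesis .
qed

lemma linv_int:
  assumes nd: "nondeg n L" and z: "z \<in> vecs n"
    and h: "\<forall>j<n. linv n L z (\<lambda>i. if i = j then 1 else 0) \<in> \<int>"
  shows "\<exists>u\<in>vecs n. z = adj n L u"
proof -
  obtain r v where w: "r \<noteq> 0" "v \<in> vecs n" "(\<lambda>i. r * z i) = adj n L v" "\<forall>y. linv n L z y = of_int (dot n y v) / of_int r"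
    using linv_wit[OF nd z] by blast
  have dv: "r dvd v j" for j
  proof (cases "j < n")
    case True
    have "of_int (v j) / of_int r \<in> (\<int> :: rat set)" using h True w(4) by (simp add: dot_delta1)
    then obtain k where "of_int (v j) / of_int r = (of_int k :: rat)" by (auto elim: Ints_cases)
    then have "v j = r * k" using w(1) by (simp add: field_simps) (metis of_int_eq_iff of_int_mult)
    then show ?thesis by simp
  next
    case False then show ?thesis using w(2) by (simp add: vecs_def)
  qed
  define u where "u = (\<lambda>j. v j div r)"
  have u: "u \<in> vecs n" using w(2) by (simp add: vecs_def u_def)
  have "v = (\<lambda>j. r * u j)" using dv by (simp add: u_def fun_eq_iff)
  then have "(\<lambda>i. r * z i) = (\<lambda>i. r * adj n L u i)" using w(3) by (simp add: adj_smul)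
  then have "z = adj n L u" using w(1) by (simp add: fun_eq_iff)
  then show ?thesis using u by blast
qed




lemma cls_self: "x \<in> cls n L x"
  unfolding cls_def by (rule CollectI, rule bexI[of _ "\<lambda>i. 0"]) auto

lemma cls_mem: "z \<in> cls n L x \<longleftrightarrow> (\<exists>v\<in>vecs n. z = (\<lambda>i. x i + adj n L v i))"
  unfolding cls_def by (rule mem_Collect_eq)

lemma cls_eq_iff: "cls n L x = cls n L y \<longleftrightarrow> (\<exists>u\<in>vecs n. y = (\<lambda>i. x i + adj n L u i))"
proof
  assume "cls n L x = cls n L y"
  then have "y \<in> cls n L x" using cls_self by metis
  then show "\<exists>u\<in>vecs n. y = (\<lambda>i. x i + adj n L u i)" by (simp only: cls_mem)
next
  assume "\<exists>u\<in>vecs n. y = (\<lambda>i. x i + adj n L u i)"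
  then obtain u where u: "u \<in> vecs n" "y = (\<lambda>i. x i + adj n L u i)" by blast
  show "cls n L x = cls n L y"
  proof (intro equalityI subsetI)
    fix z assume "z \<in> cls n L x"
    then obtain v where v: "v \<in> vecs n" "z = (\<lambda>i. x i + adj n L v i)" by (simp only: cls_mem) blast
    have "z = (\<lambda>i. y i + adj n L (\<lambda>i. v i - u i) i)" using v u by (simp add: adj_diff)
    moreover have "(\<lambda>i. v i - u i) \<in> vecs n" using u v by (simp add: vecs_def)
    ultimately show "z \<in> cls n L y" by (simp only: cls_mem) blast
  next
    fix z assume "z \<in> cls n L y"
    then obtain v where v: "v \<in> vecs n" "z = (\<lambda>i. y i + adj n L v i)" by (simp only: cls_mem) blast
    have "z = (\<lambda>i. x i + adj n L (\<lambda>i. u i + v i) i)" using v u by (simp add: adj_add add.assoc)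
    moreover have "(\<lambda>i. u i + v i) \<in> vecs n" using u v by simp
    ultimately show "z \<in> cls n L x" by (simp only: cls_mem) blast
  qed
qed

lemma cls_sum: "{(\<lambda>i. u i + w i) | u w. u \<in> cls n L x \<and> w \<in> cls n L y} = cls n L (\<lambda>i. x i + y i)"
proof (intro equalityI subsetI)
  fix z assume "z \<in> {(\<lambda>i. u i + w i) | u w. u \<in> cls n L x \<and> w \<in> cls n L y}"
  then obtain u' w' where uw: "z = (\<lambda>i. u' i + w' i)" "u' \<in> cls n L x" "w' \<in> cls n L y" by blast
  obtain v where "v \<in> vecs n" "u' = (\<lambda>i. x i + adj n L v i)" using uw(2) by (simp only: cls_mem) blast
  moreover obtain w where "w \<in> vecs n" "w' = (\<lambda>i. y i + adj n L w i)" using uw(3) by (simp only: cls_mem) blast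
  ultimately have "v \<in> vecs n" "w \<in> vecs n" "z = (\<lambda>i. x i + adj n L v i + (y i + adj n L w i))"
    using uw(1) by auto
  moreover have "(\<lambda>i. x i + adj n L v i + (y i + adj n L w i)) = (\<lambda>i. x i + y i + adj n L (\<lambda>i. v i + w i) i)"
    by (simp add: adj_add algebra_simps)
  ultimately show "z \<in> cls n L (\<lambda>i. x i + y i)" unfolding cls_mem
    by (intro bexI[of _ "\<lambda>i. v i + w i"]) auto
next
  fix z assume "z \<in> cls n L (\<lambda>i. x i + y i)"
  then obtain v where v: "v \<in> vecs n" "z = (\<lambda>i. x i + y i + adj n L v i)" by (simp only: cls_mem) blast
  have zz: "z = (\<lambda>i. (x i + adj n L v i) + y i)" using v by (simp add: algebra_simps)
  moreover have mm: "(\<lambda>i. x i + adj n L v i) \<in> cls n L x" using v by (simp only: cls_mem) blast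
  ultimately show "z \<in> {(\<lambda>i. u i + w i) | u w. u \<in> cls n L x \<and> w \<in> cls n L y}"
  proof -
    have "\<exists>u w. z = (\<lambda>i. u i + w i) \<and> u \<in> cls n L x \<and> w \<in> cls n L y"
      apply (rule exI[of _ "\<lambda>i. x i + adj n L v i"], rule exI[of _ y])
      using zz mm cls_self[where x=y and n=n and L=L] by simp
    then show ?thesis by (simp only: mem_Collect_eq)
  qed
qed

definition Qr :: "family \<Rightarrow> nat \<Rightarrow> (nat \<Rightarrow> nat \<Rightarrow> int) \<Rightarrow> (nat \<Rightarrow> int) \<Rightarrow> (nat \<Rightarrow> int) \<Rightarrow> rat" where
  "Qr F n L a x = (linv n L x x + (if F = Fc then linv n L x a else 0)) / 2"

lemma frac_eqI: "(a::rat) - b \<in> \<int> \<Longrightarrow> frac a = frac b"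
proof -
  assume "a - b \<in> \<int>"
  then obtain k where "a = b + of_int k" by (metis Ints_cases add.commute diff_add_cancel)
  then show ?thesis by (simp add: frac_def)
qed

lemma frac_eqD: "frac (a::rat) = frac b \<Longrightarrow> a - b \<in> \<int>"
proof -
  assume "frac a = frac b"
  then have "a - b = of_int (\<lfloor>a\<rfloor> - \<lfloor>b\<rfloor>)" by (simp add: frac_def algebra_simps)
  then show ?thesis by simp
qed

lemma Qr_add:
  assumes nd: "nondeg n L" and s: "symm n L" and x: "x \<in> vecs n" and y: "y \<in> vecs n"
  shows "Qr F n L a (\<lambda>i. x i + y i) = Qr F n L a x + Qr F n L a y + linv n L x y"
proof -
  have "linv n L (\<lambda>i. x i + y i) (\<lambda>i. x i + y i) = linv n L x x + linv n L x y + linv n L y x + linv n L y y"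
    using x y by (simp add: linv_add1[OF nd] linv_add2[OF nd])
  moreover have "linv n L y x = linv n L x y" using linv_sym[OF nd s y x] .
  moreover have "linv n L (\<lambda>i. x i + y i) a = linv n L x a + linv n L y a" using linv_add1[OF nd x y] .
  ultimately show ?thesis by (simp add: Qr_def field_simps)
qed

lemma Qr_shift:
  assumes q: "quadfun n L a" and nd: "nondeg n L" and f: "in_fam F n L a"
    and x: "x \<in> vecs n" and v: "v \<in> vecs n"
  shows "Qr F n L a (\<lambda>i. x i + adj n L v i) - Qr F n L a x \<in> \<int>"
proof -
  have s: "symm n L" and a: "a \<in> vecs n" using q by (auto simp: quadfun_def)
  have "Qr F n L a (\<lambda>i. x i + adj n L v i) = Qr F n L a x + Qr F n L a (adj n L v) + linv n L x (adj n L v)"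
    by (rule Qr_add[OF nd s x]) simp
  moreover have "linv n L x (adj n L v) = of_int (dot n x v)" by (rule linv_adj2[OF nd s x])
  moreover have "Qr F n L a (adj n L v) = (of_int (bil n L v v) + (if F = Fc then of_int (dot n a v) else 0)) / 2"
    using v by (simp add: Qr_def linv_adj1[OF nd] bil_dot)
  moreover have "(of_int (bil n L v v) + (if F = Fc then of_int (dot n a v) else 0)) / 2 \<in> (\<int> :: rat set)"
  proof -
    have "even (bil n L v v + (if F = Fc then dot n a v else 0))"
      using f v by (cases F) (auto simp: in_fam_def)
    then obtain k where k: "bil n L v v + (if F = Fc then dot n a v else 0) = 2 * k" by blast
    have "(of_int (bil n L v v) + (if F = Fc then of_int (dot n a v) else 0)) = (of_int (bil n L v v + (if F = Fc then dot n a v else 0)) :: rat)"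
      by simp
    also have "\<dots> = 2 * of_int k" using k by simp
    finally have "(of_int (bil n L v v) + (if F = Fc then of_int (dot n a v) else 0)) / 2 = (of_int k :: rat)"
      by simp
    then show ?thesis by simp
  qed
  ultimately show ?thesis by simp
qed

lemma qstar_cls:
  assumes q: "quadfun n L a" and nd: "nondeg n L" and f: "in_fam F n L a" and x: "x \<in> vecs n"
  shows "qstar F n L a (cls n L x) = frac (Qr F n L a x)"
proof -
  define x' where "x' = (SOME x'. x' \<in> cls n L x)"
  have "x' \<in> cls n L x" unfolding x'_def using cls_self by (metis someI)
  then obtain v where v: "v \<in> vecs n" "x' = (\<lambda>i. x i + adj n L v i)" by (simp only: cls_mem) blast
  have "qstar F n L a (cls n L x) = frac (Qr F n L a x')"
    unfolding qstar_def x'_def[symmetric] by (simp add: qc_def qev_def Qr_def Let_def)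
  also have "\<dots> = frac (Qr F n L a x)" using Qr_shift[OF q nd f x v(1)] v(2) by (simp add: frac_eqI)
  finally show ?thesis .
qed



definition pzero :: pvec where "pzero = ((\<lambda>i. 0), (\<lambda>i. 0))"
definition psmul :: "int \<Rightarrow> pvec \<Rightarrow> pvec" where
  "psmul c p = ((\<lambda>i. c * fst p i), (\<lambda>i. c * snd p i))"
definition lc :: "nat \<Rightarrow> (nat \<Rightarrow> int) \<Rightarrow> (nat \<Rightarrow> pvec) \<Rightarrow> pvec" where
  "lc k c b = ((\<lambda>j. \<Sum>i<k. c i * fst (b i) j), (\<lambda>j. \<Sum>i<k. c i * snd (b i) j))"
definition grp :: "pvec set \<Rightarrow> bool" where
  "grp G \<longleftrightarrow> pzero \<in> G \<and> (\<forall>x\<in>G. \<forall>y\<in>G. padd x y \<in> G) \<and> (\<forall>x\<in>G. pneg x \<in> G)"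

lemma free_fg_iff: "free_fg G \<longleftrightarrow> (\<exists>k b. (\<forall>i<k. b i \<in> G) \<and> (\<forall>h\<in>G. \<exists>!c. (\<forall>i\<ge>k. c i = 0) \<and> h = lc k c b))"
  unfolding free_fg_def lc_def ..

lemma lc_0[simp]: "lc 0 c b = pzero" by (simp add: lc_def pzero_def)
lemma lc_Suc: "lc (Suc k) c b = padd (lc k c b) (psmul (c k) (b k))"
  by (simp add: lc_def padd_def psmul_def)
lemma lc_cong: "(\<And>i. i < k \<Longrightarrow> c i = c' i) \<Longrightarrow> (\<And>i. i < k \<Longrightarrow> b i = b' i) \<Longrightarrow> lc k c b = lc k c' b'"
  unfolding lc_def by (simp add: fun_eq_iff)

lemma grp_smul_nat: "grp G \<Longrightarrow> x \<in> G \<Longrightarrow> psmul (int m) x \<in> G"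
proof (induction m)
  case 0 then show ?case by (simp add: grp_def psmul_def pzero_def)
next
  case (Suc m)
  have "psmul (int (Suc m)) x = padd (psmul (int m) x) x"
    by (simp add: psmul_def padd_def algebra_simps)
  then show ?case using Suc by (simp add: grp_def)
qed

lemma grp_smul: assumes "grp G" "x \<in> G" shows "psmul c x \<in> G"
proof (cases "c \<ge> 0")
  case True
  then show ?thesis using grp_smul_nat[OF assms, of "nat c"] by simp
next
  case False
  then have "psmul c x = pneg (psmul (int (nat (- c))) x)" by (simp add: psmul_def pneg_def)
  then show ?thesis using grp_smul_nat[OF assms, of "nat (-c)"] assms(1) by (simp add: grp_def)
qed

lemma grp_lc: "grp G \<Longrightarrow> (\<forall>i<k. b i \<in> G) \<Longrightarrow> lc k c b \<in> G"
proof (induction k)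
  case 0 then show ?case by (simp add: grp_def)
next
  case (Suc k)
  then show ?case using grp_smul[OF Suc.prems(1), of "b k" "c k"] by (simp add: lc_Suc grp_def)
qed

locale addf =
  fixes \<phi> :: "pvec \<Rightarrow> int"
  assumes add: "\<phi> (padd p q) = \<phi> p + \<phi> q"
begin
lemma zero: "\<phi> pzero = 0"
  using add[of pzero pzero] by (simp add: padd_def pzero_def)
lemma neg: "\<phi> (pneg p) = - \<phi> p"
  using add[of p "pneg p"] zero by (simp add: padd_def pneg_def pzero_def)
lemma smul_nat: "\<phi> (psmul (int m) p) = int m * \<phi> p"
proof (induction m)
  case 0 then show ?case using zero by (simp add: psmul_def pzero_def)
next
  case (Suc m)
  have "psmul (int (Suc m)) p = padd (psmul (int m) p) p"
    by (simp add: psmul_def padd_def algebra_simps)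
  then show ?case using Suc add by (simp add: algebra_simps)
qed
lemma smul: "\<phi> (psmul c p) = c * \<phi> p"
proof (cases "c \<ge> 0")
  case True
  then show ?thesis using smul_nat[of "nat c"] by simp
next
  case False
  then have "psmul c p = pneg (psmul (int (nat (- c))) p)" by (simp add: psmul_def pneg_def)
  then show ?thesis using smul_nat[of "nat (-c)"] neg False by simp
qed
lemma lcf: "\<phi> (lc k c b) = (\<Sum>i<k. c i * \<phi> (b i))"
  by (induction k) (simp_all add: zero lc_Suc add smul)
end

lemma free_aux:
  fixes \<phi> :: "nat \<Rightarrow> pvec \<Rightarrow> int" and m :: nat and G :: "pvec set"
  assumes add: "\<And>j p q. \<phi> j (padd p q) = \<phi> j p + \<phi> j q"
  shows "grp G \<Longrightarrow> (\<forall>g\<in>G. (\<forall>j<m. \<phi> j g = 0) \<longrightarrow> g = pzero) \<Longrightarrow> free_fg G"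
proof (induction m arbitrary: G)
  case 0
  then have G: "G = {pzero}" by (auto simp: grp_def)
  show ?case unfolding free_fg_iff
  proof (intro exI[of _ 0] exI[of _ "\<lambda>i. pzero"] conjI)
    show "\<forall>i<0::nat. (\<lambda>i. pzero) i \<in> G" by simp
    show "\<forall>h\<in>G. \<exists>!c. (\<forall>i\<ge>0. c i = 0) \<and> h = lc 0 c (\<lambda>i. pzero)"
      using G by (auto simp: fun_eq_iff)
  qed
next
  case (Suc m)
  interpret af: addf "\<phi> m" by unfold_locales (rule add)
  define G' where "G' = {g\<in>G. \<phi> m g = 0}"
  have grp': "grp G'" using Suc.prems(1) af.zero af.neg af.add unfolding grp_def G'_def by auto
  have "free_fg G'"
    by (rule Suc.IH[OF grp']) (use Suc.prems(2) in \<open>auto simp: G'_def less_Suc_eq\<close>)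
  then obtain k b where kb: "\<forall>i<k. b i \<in> G'" "\<forall>h\<in>G'. \<exists>!c. (\<forall>i\<ge>k. c i = 0) \<and> h = lc k c b"
    unfolding free_fg_iff by blast
  show ?case
  proof (cases "\<forall>g\<in>G. \<phi> m g = 0")
    case True
    then have "G' = G" by (auto simp: G'_def)
    then show ?thesis using \<open>free_fg G'\<close> by simp
  next
    case False
    then obtain g0 where g0: "g0 \<in> G" "\<phi> m g0 \<noteq> 0" by blast
    define S where "S = {t::nat. t > 0 \<and> (\<exists>g\<in>G. \<phi> m g = int t)}"
    have "S \<noteq> {}"
    proof (cases "\<phi> m g0 > 0")
      case True
      then have "nat (\<phi> m g0) \<in> S" using g0 by (auto simp: S_def)
      then show ?thesis by blast
    next
      case False
      have "pneg g0 \<in> G" using Suc.prems(1) g0 by (simp add: grp_def)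
      moreover have "\<phi> m (pneg g0) = - \<phi> m g0" by (rule af.neg)
      ultimately have "nat (- \<phi> m g0) \<in> S" using g0 False by (auto simp: S_def)
      then show ?thesis by blast
    qed
    define d where "d = (LEAST t. t \<in> S)"
    have dS: "d \<in> S" unfolding d_def using \<open>S \<noteq> {}\<close> by (metis LeastI ex_in_conv)
    have dmin: "\<And>t. t \<in> S \<Longrightarrow> d \<le> t" unfolding d_def by (rule Least_le)
    obtain gs where gs: "gs \<in> G" "\<phi> m gs = int d" and d0: "d > 0" using dS by (auto simp: S_def)
    define b' where "b' = b(k := gs)"
    have bG: "\<forall>i<Suc k. b' i \<in> G" using kb(1) gs(1) by (auto simp: b'_def G'_def less_Suc_eq)
    have b'k: "b' k = gs" by (simp add: b'_def)
    have lcb': "lc k c b' = lc k c b" for c by (rule lc_cong) (auto simp: b'_def)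
    have phib: "\<phi> m (lc (Suc k) c b') = c k * int d" for c
    proof -
      have "\<phi> m (lc k c b) = 0" using af.lcf kb(1) by (simp add: G'_def)
      then show ?thesis using lcb'[of c] by (simp add: lc_Suc af.add af.smul b'_def gs(2))
    qed
    show ?thesis unfolding free_fg_iff
    proof (intro exI[of _ "Suc k"] exI[of _ b'] conjI)
      show "\<forall>i<Suc k. b' i \<in> G" by (rule bG)
      show "\<forall>h\<in>G. \<exists>!c. (\<forall>i\<ge>Suc k. c i = 0) \<and> h = lc (Suc k) c b'"
      proof
        fix h assume h: "h \<in> G"
        define t where "t = \<phi> m h"
        define q where "q = t div int d"
        define \<rho> where "\<rho> = t mod int d"
        define h' where "h' = padd h (psmul (- q) gs)"
        have h'G: "h' \<in> G" using h grp_smul[OF Suc.prems(1) gs(1)] Suc.prems(1)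
          by (simp add: h'_def grp_def)
        have "\<phi> m h' = t - q * int d" by (simp add: h'_def af.add af.smul gs(2) t_def)
        also have "\<dots> = \<rho>" by (simp add: q_def \<rho>_def algebra_simps)
        finally have ph': "\<phi> m h' = \<rho>" .
        have "\<rho> \<ge> 0" "\<rho> < int d" using d0 by (simp_all add: \<rho>_def)
        have "\<rho> = 0"
        proof (rule ccontr)
          assume "\<rho> \<noteq> 0"
          then have "nat \<rho> \<in> S" using \<open>\<rho> \<ge> 0\<close> h'G ph' by (auto simp: S_def)
          then have "d \<le> nat \<rho>" by (rule dmin)
          then show False using \<open>\<rho> < int d\<close> \<open>\<rho> \<ge> 0\<close> by (simp add: le_nat_iff)
        qed
        then have "h' \<in> G'" using h'G ph' by (simp add: G'_def)
        then obtain c where c: "\<forall>i\<ge>k. c i = 0" "h' = lc k c b" using kb(2) by blast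
        define c' where "c' = c(k := q)"
        have "lc (Suc k) c' b' = padd (lc k c b) (psmul q gs)"
          by (simp add: lc_Suc lcb' c'_def b'_def) (rule arg_cong2[where f=padd], rule lc_cong, auto)
        also have "\<dots> = h" unfolding c(2)[symmetric] h'_def by (simp add: padd_def psmul_def)
        finally have ex: "(\<forall>i\<ge>Suc k. c' i = 0) \<and> h = lc (Suc k) c' b'" using c(1) by (auto simp: c'_def)
        show "\<exists>!c. (\<forall>i\<ge>Suc k. c i = 0) \<and> h = lc (Suc k) c b'"
        proof (rule ex1I[of _ c'])
          show "(\<forall>i\<ge>Suc k. c' i = 0) \<and> h = lc (Suc k) c' b'" by (rule ex)
        next
          fix c2 assume c2: "(\<forall>i\<ge>Suc k. c2 i = 0) \<and> h = lc (Suc k) c2 b'"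
          have "c2 k * int d = c' k * int d" using phib[of c2] phib[of c'] c2 ex by simp
          then have ek: "c2 k = c' k" using d0 by simp
          have "padd (lc k c2 b) (psmul (c2 k) gs) = padd (lc k c' b) (psmul (c' k) gs)"
            using c2 ex by (simp add: lc_Suc lcb' b'k)
          then have e1: "lc k c2 b = lc k c' b" using ek
            by (simp add: padd_def psmul_def fun_eq_iff prod_eq_iff)
          have "lc k c' b \<in> G'" by (rule grp_lc[OF grp']) (use kb(1) in simp)
          then obtain cc where "\<forall>c. (\<forall>i\<ge>k. c i = 0) \<and> lc k c' b = lc k c b \<longrightarrow> c = cc"
            using kb(2) by metis
          moreover have "lc k (c2(k := 0)) b = lc k c' b" using e1 by (metis (no_types) fun_upd_other lc_cong less_irrefl_nat)
          moreover have "lc k (c'(k := 0)) b = lc k c' b" by (rule lc_cong) auto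
          moreover have "\<forall>i\<ge>k. (c2(k := 0)) i = 0" "\<forall>i\<ge>k. (c'(k := 0)) i = 0"
            using c2 ex by (auto simp: Suc_le_eq)
          ultimately have "c2(k := 0) = c'(k := 0)" by metis
          then show "c2 = c'" using ek by (metis fun_upd_triv fun_upd_upd)
        qed
      qed
    qed
  qed
qed



theorem lemma1p1:
  fixes F :: family
    and n0 n1 :: nat
    and L0 L1 :: "nat \<Rightarrow> nat \<Rightarrow> int"
    and a0 a1 :: "nat \<Rightarrow> int"
    and \<theta> :: "(nat \<Rightarrow> int) set \<Rightarrow> (nat \<Rightarrow> int) set"
  assumes q0: "quadfun n0 L0 a0" and q1: "quadfun n1 L1 a1"
    and nd0: "nondeg n0 L0" and nd1: "nondeg n1 L1"
    and f0: "in_fam F n0 L0 a0" and f1: "in_fam F n1 L1 a1"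
    and iso: "linking_iso F n0 L0 a0 n1 L1 a1 \<theta>"
  defines "H \<equiv> glueH n0 L0 n1 L1 \<theta>"
    and "lam \<equiv> glue_lam n0 L0 n1 L1"
    and "e \<equiv> emb n0 L0 n1 L1"
  shows
    "(((\<lambda>i. 0), (\<lambda>i. 0)) \<in> H \<and> (\<forall>x\<in>H. \<forall>y\<in>H. padd x y \<in> H) \<and> (\<forall>x\<in>H. pneg x \<in> H)
     \<and> free_fg H
     \<and> (\<forall>x\<in>H. \<forall>y\<in>H. lam x y \<in> \<int>)
     \<and> (\<forall>x\<in>H. \<forall>y\<in>H. lam x y = lam y x)
     \<and> (\<forall>x\<in>H. \<forall>y\<in>H. \<forall>z\<in>H. lam (padd x y) z = lam x z + lam y z)
     \<and> (\<forall>f :: pvec \<Rightarrow> int. (\<forall>x\<in>H. \<forall>y\<in>H. f (padd x y) = f x + f y)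
            \<longrightarrow> (\<exists>!x. x \<in> H \<and> (\<forall>y\<in>H. of_int (f y) = lam x y))))
    \<and>
    ((\<forall>v\<in>vecs n0 \<times> vecs n1. e v \<in> H)
     \<and> inj_on e (vecs n0 \<times> vecs n1)
     \<and> (\<forall>v\<in>vecs n0 \<times> vecs n1. \<forall>w\<in>vecs n0 \<times> vecs n1. e (padd v w) = padd (e v) (e w))
     \<and> (\<forall>v\<in>vecs n0 \<times> vecs n1. \<forall>w\<in>vecs n0 \<times> vecs n1.
          lam (e v) (e w) = of_int (bil n0 L0 (fst v) (fst w) - bil n1 L1 (snd v) (snd w))))
    \<and>
    ((a0, a1) \<in> H)
    \<and>
    (in_famQ F H lam (\<lambda>v. lam (a0, a1) v))
    \<and>
    (\<forall>v\<in>vecs n0 \<times> vecs n1.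
        lam (e v) (e v) + lam (a0, a1) (e v)
          = of_int ((bil n0 L0 (fst v) (fst v) + dot n0 a0 (fst v))
                    + (- bil n1 L1 (snd v) (snd v) + dot n1 a1 (snd v))))"
proof -
  have s0: "symm n0 L0" and av0: "a0 \<in> vecs n0" using q0 by (auto simp: quadfun_def)
  have s1: "symm n1 L1" and av1: "a1 \<in> vecs n1" using q1 by (auto simp: quadfun_def)
  have bij: "bij_betw \<theta> (Cok n0 L0) (Cok n1 L1)"
    and hom: "\<And>x y. x \<in> vecs n0 \<Longrightarrow> y \<in> vecs n0 \<Longrightarrow>
        \<theta> (cls n0 L0 (\<lambda>i. x i + y i)) = {(\<lambda>i. u i + w i) | u w. u \<in> \<theta> (cls n0 L0 x) \<and> w \<in> \<theta> (cls n0 L0 y)}"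
    and tha: "\<theta> (cls n0 L0 a0) = cls n1 L1 a1"
    and qs: "\<And>c. c \<in> Cok n0 L0 \<Longrightarrow> qstar F n1 L1 a1 (\<theta> c) = qstar F n0 L0 a0 c"
    using iso unfolding linking_iso_def by auto
  have Hmem: "p \<in> H \<longleftrightarrow> fst p \<in> vecs n0 \<and> snd p \<in> vecs n1 \<and> \<theta> (cls n0 L0 (fst p)) = cls n1 L1 (snd p)" for p
    unfolding H_def glueH_def by (cases p) simp
  have map_ex: "\<exists>z\<in>vecs n1. \<theta> (cls n0 L0 x) = cls n1 L1 z" if "x \<in> vecs n0" for x
  proof -
    have "cls n0 L0 x \<in> Cok n0 L0" using that by (simp add: Cok_def)
    then have "\<theta> (cls n0 L0 x) \<in> Cok n1 L1" using bij by (auto simp: bij_betw_def)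
    then show ?thesis by (auto simp: Cok_def)
  qed
  have surj_ex: "\<exists>x\<in>vecs n0. \<theta> (cls n0 L0 x) = cls n1 L1 z" if "z \<in> vecs n1" for z
  proof -
    have "cls n1 L1 z \<in> Cok n1 L1" using that by (simp add: Cok_def)
    then have "cls n1 L1 z \<in> \<theta> ` Cok n0 L0" using bij by (auto simp: bij_betw_def)
    then show ?thesis by (auto simp: Cok_def)
  qed
  have homc: "\<theta> (cls n0 L0 (\<lambda>i. x i + y i)) = cls n1 L1 (\<lambda>i. x1 i + y1 i)"
    if "x \<in> vecs n0" "y \<in> vecs n0" "\<theta> (cls n0 L0 x) = cls n1 L1 x1" "\<theta> (cls n0 L0 y) = cls n1 L1 y1" for x y x1 y1
    using hom[OF that(1,2)] that(3,4) cls_sum by simp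
  have th0: "\<theta> (cls n0 L0 (\<lambda>i. 0)) = cls n1 L1 (\<lambda>i. 0)"
  proof -
    obtain z where z: "z \<in> vecs n1" "\<theta> (cls n0 L0 (\<lambda>i. 0)) = cls n1 L1 z" using map_ex[of "\<lambda>i. 0"] by auto
    have "\<theta> (cls n0 L0 (\<lambda>i. (0::int) + 0)) = cls n1 L1 (\<lambda>i. z i + z i)" by (rule homc) (use z in auto)
    then have "cls n1 L1 z = cls n1 L1 (\<lambda>i. z i + z i)" using z by simp
    then obtain u where u: "u \<in> vecs n1" "(\<lambda>i. z i + z i) = (\<lambda>i. z i + adj n1 L1 u i)" unfolding cls_eq_iff by blast
    then have "z = (\<lambda>i. 0 + adj n1 L1 u i)" by (simp add: fun_eq_iff)
    then have "cls n1 L1 (\<lambda>i. 0) = cls n1 L1 z" unfolding cls_eq_iff using u(1) by blast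
    then show ?thesis using z by simp
  qed
  have thneg: "\<theta> (cls n0 L0 (\<lambda>i. - x i)) = cls n1 L1 (\<lambda>i. - x1 i)"
    if xx: "x \<in> vecs n0" "\<theta> (cls n0 L0 x) = cls n1 L1 x1" "x1 \<in> vecs n1" for x x1
  proof -
    obtain w where w: "w \<in> vecs n1" "\<theta> (cls n0 L0 (\<lambda>i. - x i)) = cls n1 L1 w" using map_ex[OF vecs_neg[OF xx(1)]] by auto
    have "\<theta> (cls n0 L0 (\<lambda>i. x i + - x i)) = cls n1 L1 (\<lambda>i. x1 i + w i)" by (rule homc) (use xx w in auto)
    then have "cls n1 L1 (\<lambda>i. 0) = cls n1 L1 (\<lambda>i. x1 i + w i)" using th0 by simp
    then obtain u where u: "u \<in> vecs n1" "(\<lambda>i. x1 i + w i) = (\<lambda>i. 0 + adj n1 L1 u i)" unfolding cls_eq_iff by blast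
    have "(\<lambda>i. - x1 i) = (\<lambda>i. w i + adj n1 L1 (\<lambda>i. - u i) i)"
    proof
      fix i
      have "x1 i + w i = adj n1 L1 u i" using fun_cong[OF u(2), of i] by simp
      then show "- x1 i = w i + adj n1 L1 (\<lambda>i. - u i) i" unfolding adj_neg by linarith
    qed
    moreover have "(\<lambda>i. - u i) \<in> vecs n1" using u(1) by (rule vecs_neg)
    ultimately have "cls n1 L1 w = cls n1 L1 (\<lambda>i. - x1 i)" unfolding cls_eq_iff by blast
    then show ?thesis using w by simp
  qed
  have Qdiff: "Qr F n0 L0 a0 (fst p) - Qr F n1 L1 a1 (snd p) \<in> \<int>" if "p \<in> H" for p
  proof -
    have p: "fst p \<in> vecs n0" "snd p \<in> vecs n1" "\<theta> (cls n0 L0 (fst p)) = cls n1 L1 (snd p)" using that Hmem by auto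
    have "cls n0 L0 (fst p) \<in> Cok n0 L0" using p by (simp add: Cok_def)
    from qs[OF this] p have "qstar F n1 L1 a1 (cls n1 L1 (snd p)) = qstar F n0 L0 a0 (cls n0 L0 (fst p))" by simp
    then have "frac (Qr F n1 L1 a1 (snd p)) = frac (Qr F n0 L0 a0 (fst p))"
      using qstar_cls[OF q0 nd0 f0 p(1)] qstar_cls[OF q1 nd1 f1 p(2)] by simp
    then have "Qr F n1 L1 a1 (snd p) - Qr F n0 L0 a0 (fst p) \<in> \<int>" by (rule frac_eqD)
    then have "- (Qr F n1 L1 a1 (snd p) - Qr F n0 L0 a0 (fst p)) \<in> \<int>" by (rule Ints_minus)
    then show ?thesis by simp
  qed
  have Hadd: "padd p q \<in> H" if "p \<in> H" "q \<in> H" for p q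
    using that homc unfolding Hmem by (simp add: padd_def)
  have Hneg: "pneg p \<in> H" if "p \<in> H" for p
    using that thneg unfolding Hmem by (simp add: pneg_def)
  have H0: "((\<lambda>i. 0), (\<lambda>i. 0)) \<in> H" using th0 unfolding Hmem by simp
  have lamdef: "lam p q = linv n0 L0 (fst p) (fst q) - linv n1 L1 (snd p) (snd q)" for p q
    by (simp add: lam_def glue_lam_def)
  have lam_int: "lam p q \<in> \<int>" if "p \<in> H" "q \<in> H" for p q
  proof -
    have pq: "padd p q \<in> H" using Hadd that .
    have v: "fst p \<in> vecs n0" "snd p \<in> vecs n1" "fst q \<in> vecs n0" "snd q \<in> vecs n1" using that Hmem by auto
    have "Qr F n0 L0 a0 (fst (padd p q)) - Qr F n1 L1 a1 (snd (padd p q))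
        = (Qr F n0 L0 a0 (fst p) - Qr F n1 L1 a1 (snd p)) + (Qr F n0 L0 a0 (fst q) - Qr F n1 L1 a1 (snd q)) + lam p q"
      unfolding lamdef padd_def using Qr_add[OF nd0 s0 v(1) v(3)] Qr_add[OF nd1 s1 v(2) v(4)] by simp
    then have "lam p q = (Qr F n0 L0 a0 (fst (padd p q)) - Qr F n1 L1 a1 (snd (padd p q)))
        - (Qr F n0 L0 a0 (fst p) - Qr F n1 L1 a1 (snd p)) - (Qr F n0 L0 a0 (fst q) - Qr F n1 L1 a1 (snd q))"
      by simp
    then show ?thesis using Qdiff[OF pq] Qdiff[OF that(1)] Qdiff[OF that(2)] by (simp add: Ints_diff)
  qed
  have edef: "e v = (adj n0 L0 (fst v), (\<lambda>i. - adj n1 L1 (snd v) i))" for v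
    by (simp add: e_def emb_def)
  have lam_e: "lam (x0, x1) (e w) = of_int (dot n0 x0 (fst w) + dot n1 x1 (snd w))"
    if "x0 \<in> vecs n0" "x1 \<in> vecs n1" for x0 x1 w
    using that by (simp add: lamdef edef linv_adj2[OF nd0 s0] linv_neg2[OF nd1] linv_adj2[OF nd1 s1])
  have eH: "e v \<in> H" if "v \<in> vecs n0 \<times> vecs n1" for v
  proof -
    have "\<theta> (cls n0 L0 (adj n0 L0 (fst v))) = cls n1 L1 (\<lambda>i. - adj n1 L1 (snd v) i)"
    proof -
      have "cls n0 L0 (adj n0 L0 (fst v)) = cls n0 L0 (\<lambda>i. 0)"
        unfolding cls_eq_iff using that by (intro bexI[of _ "\<lambda>i. - fst v i"]) (auto simp: adj_neg)
      moreover have "cls n1 L1 (\<lambda>i. - adj n1 L1 (snd v) i) = cls n1 L1 (\<lambda>i. 0)"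
        unfolding cls_eq_iff using that by (intro bexI[of _ "snd v"]) auto
      ultimately show ?thesis using th0 by simp
    qed
    then show ?thesis unfolding Hmem edef by simp
  qed
  have eadd: "e (padd v w) = padd (e v) (e w)" for v w
    by (simp add: edef padd_def adj_add)
  have esmul: "e (psmul c v) = psmul c (e v)" for c v
    by (simp add: edef psmul_def adj_smul)
  have einj: "inj_on e (vecs n0 \<times> vecs n1)"
  proof (rule inj_onI)
    fix v w assume vw: "v \<in> vecs n0 \<times> vecs n1" "w \<in> vecs n0 \<times> vecs n1" "e v = e w"
    then have "adj n0 L0 (fst v) = adj n0 L0 (fst w)" "adj n1 L1 (snd v) = adj n1 L1 (snd w)"
      by (auto simp: edef fun_eq_iff)
    then have "fst v = fst w" "snd v = snd w" using adj_inj[OF nd0] adj_inj[OF nd1] vw(1,2) by auto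
    then show "v = w" by (simp add: prod_eq_iff)
  qed
  have lam_ee: "lam (e v) (e w) = of_int (bil n0 L0 (fst v) (fst w) - bil n1 L1 (snd v) (snd w))"
    if "v \<in> vecs n0 \<times> vecs n1" "w \<in> vecs n0 \<times> vecs n1" for v w
  proof -
    have "lam (e v) (e w) = of_int (dot n0 (adj n0 L0 (fst v)) (fst w) + dot n1 (\<lambda>i. - adj n1 L1 (snd v) i) (snd w))"
      unfolding edef[of v] by (rule lam_e) (use that in auto)
    also have "\<dots> = of_int (bil n0 L0 (fst v) (fst w) - bil n1 L1 (snd v) (snd w))"
      by (simp add: bil_dot dot_neg1 dot_adj_sym[OF s0, of "fst v"] dot_adj_sym[OF s1, of "snd v"])
    finally show ?thesis .
  qed
  have aH: "(a0, a1) \<in> H" using av0 av1 tha unfolding Hmem by simp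
  have lam_sym: "lam x y = lam y x" if "x \<in> H" "y \<in> H" for x y
    using that unfolding Hmem lamdef by (simp add: linv_sym[OF nd0 s0] linv_sym[OF nd1 s1])
  have lam_add: "lam (padd x y) z = lam x z + lam y z" if "x \<in> H" "y \<in> H" for x y z
    using that unfolding Hmem lamdef by (simp add: padd_def linv_add1[OF nd0] linv_add1[OF nd1])
  have grpH: "grp H" unfolding grp_def pzero_def using H0 Hadd Hneg by blast
  have freeH: "free_fg H"
  proof (rule free_aux[where \<phi> = "\<lambda>j p. if j < n0 then fst p j else snd p (j - n0)" and m = "n0 + n1"])
    show "grp H" by (rule grpH)
    show "\<And>j p q. (if j < n0 then fst (padd p q) j else snd (padd p q) (j - n0)) =
        (if j < n0 then fst p j else snd p (j - n0)) + (if j < n0 then fst q j else snd q (j - n0))"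
      by (simp add: padd_def)
    show "\<forall>g\<in>H. (\<forall>j<n0 + n1. (if j < n0 then fst g j else snd g (j - n0)) = 0) \<longrightarrow> g = pzero"
    proof (intro ballI impI)
      fix g assume g: "g \<in> H" and z: "\<forall>j<n0 + n1. (if j < n0 then fst g j else snd g (j - n0)) = 0"
      have "fst g \<in> vecs n0" "snd g \<in> vecs n1" using g Hmem by auto
      moreover have "fst g j = 0" if "j < n0" for j using z that by (metis trans_less_add1)
      moreover have "snd g j = 0" if "j < n1" for j using z[rule_format, of "n0 + j"] that by simp
      ultimately have "fst g = (\<lambda>i. 0)" "snd g = (\<lambda>i. 0)" by (auto simp: vecs_def fun_eq_iff) (meson not_le)+
      then show "g = pzero" by (simp add: pzero_def prod_eq_iff)
    qed
  qed
  have vecs_mono: "w \<in> vecs n" if "m \<le> n" "w \<in> vecs m" for w :: "nat \<Rightarrow> int" and m n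
    using that by (simp add: vecs_def)
  have unimod: "\<exists>!x. x \<in> H \<and> (\<forall>y\<in>H. of_int (f y) = lam x y)"
    if fadd: "\<forall>x\<in>H. \<forall>y\<in>H. f (padd x y) = f x + f y" for f :: "pvec \<Rightarrow> int"
  proof -
    have fz: "f ((\<lambda>i. 0), (\<lambda>i. 0)) = 0"
      using fadd[rule_format, OF H0 H0] by (simp add: padd_def)
    have fneg: "f (pneg y) = - f y" if "y \<in> H" for y
      using fadd[rule_format, OF that Hneg[OF that]] fz by (simp add: padd_def pneg_def)
    have fsn: "psmul (int m) y \<in> H \<and> f (psmul (int m) y) = int m * f y" if yH: "y \<in> H" for y m
    proof (induction m)
      case 0 then show ?case using H0 fz by (simp add: psmul_def)
    next
      case (Suc m)
      have eq: "psmul (int (Suc m)) y = padd (psmul (int m) y) y" by (simp add: psmul_def padd_def algebra_simps)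
      show ?case unfolding eq using Suc Hadd[OF _ yH] fadd yH by (simp add: algebra_simps)
    qed
    have fs: "psmul c y \<in> H \<and> f (psmul c y) = c * f y" if yH: "y \<in> H" for y c
    proof (cases "c \<ge> 0")
      case True then show ?thesis using fsn[OF yH, of "nat c"] by simp
    next
      case False
      have eq: "psmul c y = pneg (psmul (int (nat (-c))) y)" using False by (simp add: psmul_def pneg_def)
      show ?thesis unfolding eq using fsn[OF yH, of "nat (-c)"] Hneg fneg False by simp
    qed
    define dl :: "nat \<Rightarrow> nat \<Rightarrow> int" where "dl j = (\<lambda>i. if i = j then 1 else 0)" for j
    have dlv: "dl j \<in> vecs n" if "j < n" for j n using that by (simp add: dl_def)
    define g0 where "g0 w = f (e (w, (\<lambda>i. 0)))" for w
    define g1 where "g1 w = f (e ((\<lambda>i. 0), w))" for w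
    define x0 where "x0 = (\<lambda>j. if j < n0 then g0 (dl j) else 0)"
    define x1 where "x1 = (\<lambda>j. if j < n1 then g1 (dl j) else 0)"
    have x0v: "x0 \<in> vecs n0" by (simp add: x0_def vecs_def)
    have x1v: "x1 \<in> vecs n1" by (simp add: x1_def vecs_def)
    have ez: "e ((\<lambda>i. 0), (\<lambda>i. 0)) = ((\<lambda>i. 0), (\<lambda>i. 0))" by (simp add: edef)
    have lin0: "g0 w = (\<Sum>j<m. w j * g0 (dl j))" if "m \<le> n0" "w \<in> vecs m" for m w
      using that
    proof (induction m arbitrary: w)
      case 0
      then have "w = (\<lambda>i. 0)" by (simp add: vecs_def fun_eq_iff)
      then show ?case by (simp add: g0_def ez fz)
    next
      case (Suc m)
      define w' where "w' = w(m := 0)"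
      have w'v: "w' \<in> vecs m" using Suc.prems by (auto simp: w'_def vecs_def)
      have "(w, (\<lambda>i. 0)) = padd (w', (\<lambda>i. 0)) (psmul (w m) (dl m, (\<lambda>i. 0)))"
        by (simp add: padd_def psmul_def w'_def dl_def fun_eq_iff)
      then have "e (w, (\<lambda>i. 0)) = padd (e (w', (\<lambda>i. 0))) (psmul (w m) (e (dl m, (\<lambda>i. 0))))"
        by (simp add: eadd esmul)
      moreover have "e (w', (\<lambda>i. 0)) \<in> H" using eH vecs_mono[OF _ w'v, of n0] Suc.prems(1) by simp
      moreover have "e (dl m, (\<lambda>i. 0)) \<in> H" using eH dlv[of m n0] Suc.prems(1) by simp
      ultimately have "g0 w = g0 w' + w m * g0 (dl m)"
        unfolding g0_def using fadd fs by simp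
      moreover have "g0 w' = (\<Sum>j<m. w j * g0 (dl j))"
      proof -
        have "g0 w' = (\<Sum>j<m. w' j * g0 (dl j))" using Suc.IH[OF _ w'v] Suc.prems(1) by simp
        also have "\<dots> = (\<Sum>j<m. w j * g0 (dl j))" by (rule sum.cong) (auto simp: w'_def)
        finally show ?thesis .
      qed
      ultimately show ?case by simp
    qed
    have lin1: "g1 w = (\<Sum>j<m. w j * g1 (dl j))" if "m \<le> n1" "w \<in> vecs m" for m w
      using that
    proof (induction m arbitrary: w)
      case 0
      then have "w = (\<lambda>i. 0)" by (simp add: vecs_def fun_eq_iff)
      then show ?case by (simp add: g1_def ez fz)
    next
      case (Suc m)
      define w' where "w' = w(m := 0)"
      have w'v: "w' \<in> vecs m" using Suc.prems by (auto simp: w'_def vecs_def)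
      have "((\<lambda>i. 0), w) = padd ((\<lambda>i. 0), w') (psmul (w m) ((\<lambda>i. 0), dl m))"
        by (simp add: padd_def psmul_def w'_def dl_def fun_eq_iff)
      then have "e ((\<lambda>i. 0), w) = padd (e ((\<lambda>i. 0), w')) (psmul (w m) (e ((\<lambda>i. 0), dl m)))"
        by (simp add: eadd esmul)
      moreover have "e ((\<lambda>i. 0), w') \<in> H" using eH vecs_mono[OF _ w'v, of n1] Suc.prems(1) by simp
      moreover have "e ((\<lambda>i. 0), dl m) \<in> H" using eH dlv[of m n1] Suc.prems(1) by simp
      ultimately have "g1 w = g1 w' + w m * g1 (dl m)"
        unfolding g1_def using fadd fs by simp
      moreover have "g1 w' = (\<Sum>j<m. w j * g1 (dl j))"
      proof -
        have "g1 w' = (\<Sum>j<m. w' j * g1 (dl j))" using Suc.IH[OF _ w'v] Suc.prems(1) by simp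
        also have "\<dots> = (\<Sum>j<m. w j * g1 (dl j))" by (rule sum.cong) (auto simp: w'_def)
        finally show ?thesis .
      qed
      ultimately show ?case by simp
    qed
    have fe: "f (e w) = dot n0 x0 (fst w) + dot n1 x1 (snd w)" if wv: "w \<in> vecs n0 \<times> vecs n1" for w
    proof -
      have "w = padd (fst w, (\<lambda>i. 0)) ((\<lambda>i. 0), snd w)" by (simp add: padd_def)
      then have "e w = padd (e (fst w, (\<lambda>i. 0))) (e ((\<lambda>i. 0), snd w))" by (metis eadd)
      moreover have "e (fst w, (\<lambda>i. 0)) \<in> H" "e ((\<lambda>i. 0), snd w) \<in> H" using eH wv by auto
      ultimately have "f (e w) = g0 (fst w) + g1 (snd w)" unfolding g0_def g1_def using fadd by simp
      also have "\<dots> = (\<Sum>j<n0. fst w j * g0 (dl j)) + (\<Sum>j<n1. snd w j * g1 (dl j))"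
        using lin0[of n0 "fst w"] lin1[of n1 "snd w"] wv by auto
      also have "\<dots> = dot n0 x0 (fst w) + dot n1 x1 (snd w)"
        unfolding dot_def x0_def x1_def by (simp add: mult.commute)
      finally show ?thesis .
    qed
    have fl: "of_int (f y) = lam (x0, x1) y" if yH: "y \<in> H" for y
    proof -
      have yv: "fst y \<in> vecs n0" "snd y \<in> vecs n1" using yH Hmem by auto
      obtain r0 v0 where w0: "r0 \<noteq> 0" "v0 \<in> vecs n0" "(\<lambda>i. r0 * fst y i) = adj n0 L0 v0"
        using exists_wit[OF nd0 yv(1)] by blast
      obtain r1 v1 where w1: "r1 \<noteq> 0" "v1 \<in> vecs n1" "(\<lambda>i. r1 * snd y i) = adj n1 L1 v1"
        using exists_wit[OF nd1 yv(2)] by blast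
      define w where "w = ((\<lambda>i. r1 * v0 i), (\<lambda>i. - (r0 * v1 i)))"
      have wv: "w \<in> vecs n0 \<times> vecs n1" using w0 w1 by (simp add: w_def)
      have ew: "psmul (r0 * r1) y = e w"
      proof -
        have "(\<lambda>i. r0 * r1 * fst y i) = adj n0 L0 (\<lambda>i. r1 * v0 i)"
          unfolding adj_smul w0(3)[symmetric] by (simp add: algebra_simps)
        moreover have "(\<lambda>i. r0 * r1 * snd y i) = (\<lambda>i. - adj n1 L1 (\<lambda>i. - (r0 * v1 i)) i)"
          unfolding adj_neg adj_smul w1(3)[symmetric] by (simp add: algebra_simps)
        ultimately show ?thesis by (simp add: psmul_def edef w_def)
      qed
      have "of_int (r0 * r1) * of_int (f y) = (of_int (f (psmul (r0 * r1) y)) :: rat)"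
        using fs[OF yH] by simp
      also have "\<dots> = of_int (f (e w))" by (simp add: ew)
      also have "\<dots> = lam (x0, x1) (e w)" using lam_e[OF x0v x1v, of w] fe[OF wv] by simp
      also have "\<dots> = lam (x0, x1) (psmul (r0 * r1) y)" by (simp add: ew)
      also have "\<dots> = of_int (r0 * r1) * lam (x0, x1) y"
        unfolding lamdef psmul_def by (simp add: linv_smul2[OF nd0 x0v] linv_smul2[OF nd1 x1v] algebra_simps)
      finally show ?thesis using w0(1) w1(1) by simp
    qed
    have xH: "(x0, x1) \<in> H"
    proof -
      obtain z1 where z1: "z1 \<in> vecs n1" "\<theta> (cls n0 L0 x0) = cls n1 L1 z1" using map_ex[OF x0v] by blast
      have xzH: "(x0, z1) \<in> H" using z1 x0v unfolding Hmem by simp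
      have "\<forall>j<n1. linv n1 L1 (\<lambda>i. z1 i - x1 i) (dl j) \<in> \<int>"
      proof (intro allI impI)
        fix j assume j: "j < n1"
        obtain y0 where y0: "y0 \<in> vecs n0" "\<theta> (cls n0 L0 y0) = cls n1 L1 (dl j)" using surj_ex[OF dlv[OF j]] by blast
        have yH: "(y0, dl j) \<in> H" using y0 dlv[OF j] unfolding Hmem by simp
        have "lam (x0, x1) (y0, dl j) \<in> \<int>" using fl[OF yH] by (metis Ints_of_int)
        moreover have "lam (x0, z1) (y0, dl j) \<in> \<int>" by (rule lam_int[OF xzH yH])
        ultimately have "lam (x0, x1) (y0, dl j) - lam (x0, z1) (y0, dl j) \<in> \<int>" by (rule Ints_diff)
        moreover have "lam (x0, x1) (y0, dl j) - lam (x0, z1) (y0, dl j) = linv n1 L1 (\<lambda>i. z1 i - x1 i) (dl j)"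
          unfolding lamdef using linv_diff1[OF nd1 z1(1) x1v] by simp
        ultimately show "linv n1 L1 (\<lambda>i. z1 i - x1 i) (dl j) \<in> \<int>" by simp
      qed
      moreover have "(\<lambda>i. z1 i - x1 i) \<in> vecs n1" using z1(1) x1v by (simp add: vecs_def)
      ultimately obtain u where u: "u \<in> vecs n1" "(\<lambda>i. z1 i - x1 i) = adj n1 L1 u"
        using linv_int[OF nd1, of "\<lambda>i. z1 i - x1 i"] unfolding dl_def by blast
      have "x1 = (\<lambda>i. z1 i + adj n1 L1 (\<lambda>i. - u i) i)"
      proof
        fix i
        have "z1 i - x1 i = adj n1 L1 u i" using fun_cong[OF u(2), of i] by simp
        then show "x1 i = z1 i + adj n1 L1 (\<lambda>i. - u i) i" unfolding adj_neg by linarith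
      qed
      moreover have "(\<lambda>i. - u i) \<in> vecs n1" using u(1) by (rule vecs_neg)
      ultimately have "cls n1 L1 z1 = cls n1 L1 x1" unfolding cls_eq_iff by blast
      then show ?thesis using z1 x0v x1v unfolding Hmem by simp
    qed
    have uniq: "p = (x0, x1)" if pH: "p \<in> H" and pf: "\<forall>y\<in>H. of_int (f y) = lam p y" for p
    proof -
      have pv: "fst p \<in> vecs n0" "snd p \<in> vecs n1" using pH Hmem by auto
      have "fst p j = x0 j" for j
      proof (cases "j < n0")
        case True
        have eH': "e (dl j, (\<lambda>i. 0)) \<in> H" using eH dlv[OF True] by simp
        have "lam (fst p, snd p) (e (dl j, (\<lambda>i. 0))) = of_int (fst p j)"
          using lam_e[OF pv, of "(dl j, (\<lambda>i. 0))"] True by (simp add: dl_def dot_delta2)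
        moreover have "of_int (f (e (dl j, (\<lambda>i. 0)))) = lam p (e (dl j, (\<lambda>i. 0)))" using pf eH' by blast
        ultimately show ?thesis using True by (simp add: x0_def g0_def)
      next
        case False then show ?thesis using pv by (simp add: x0_def vecs_def)
      qed
      moreover have "snd p j = x1 j" for j
      proof (cases "j < n1")
        case True
        have eH': "e ((\<lambda>i. 0), dl j) \<in> H" using eH dlv[OF True] by simp
        have "lam (fst p, snd p) (e ((\<lambda>i. 0), dl j)) = of_int (snd p j)"
          using lam_e[OF pv, of "((\<lambda>i. 0), dl j)"] True by (simp add: dl_def dot_delta2)
        moreover have "of_int (f (e ((\<lambda>i. 0), dl j))) = lam p (e ((\<lambda>i. 0), dl j))" using pf eH' by blast
        ultimately show ?thesis using True by (simp add: x1_def g1_def)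
      next
        case False then show ?thesis using pv by (simp add: x1_def vecs_def)
      qed
      ultimately show ?thesis by (simp add: prod_eq_iff fun_eq_iff)
    qed
    show ?thesis
    proof (rule ex1I[of _ "(x0, x1)"])
      show "(x0, x1) \<in> H \<and> (\<forall>y\<in>H. of_int (f y) = lam (x0, x1) y)" using xH fl by blast
    next
      fix p assume "p \<in> H \<and> (\<forall>y\<in>H. of_int (f y) = lam p y)"
      then show "p = (x0, x1)" using uniq by blast
    qed
  qed
  have key: "lam v v + (if F = Fc then lam (a0, a1) v else 0) = 2 * (Qr F n0 L0 a0 (fst v) - Qr F n1 L1 a1 (snd v))"
    if vH: "v \<in> H" for v
  proof -
    have vv: "fst v \<in> vecs n0" "snd v \<in> vecs n1" using vH Hmem by auto
    have "linv n0 L0 a0 (fst v) = linv n0 L0 (fst v) a0" by (rule linv_sym[OF nd0 s0 av0 vv(1)])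
    moreover have "linv n1 L1 a1 (snd v) = linv n1 L1 (snd v) a1" by (rule linv_sym[OF nd1 s1 av1 vv(2)])
    ultimately show ?thesis unfolding lamdef Qr_def by (simp add: field_simps)
  qed
  have half: "(lam v v + (if F = Fc then lam (a0, a1) v else 0)) / 2 \<in> \<int>" if vH: "v \<in> H" for v
  proof -
    have "(2 * (Qr F n0 L0 a0 (fst v) - Qr F n1 L1 a1 (snd v))) / 2 = Qr F n0 L0 a0 (fst v) - Qr F n1 L1 a1 (snd v)"
      by simp
    then show ?thesis unfolding key[OF vH] using Qdiff[OF vH] by metis
  qed
  have famQ: "in_famQ F H lam (\<lambda>v. lam (a0, a1) v)"
  proof (cases F)
    case Fc then show ?thesis using half by (simp add: in_famQ_def)
  next
    case Fev then show ?thesis using half by (simp add: in_famQ_def)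
  next
    case Fo
    have "a0 = (\<lambda>i. 0)" "a1 = (\<lambda>i. 0)" using f0 f1 Fo by (auto simp: in_fam_def fun_eq_iff)
    then have "lam (a0, a1) v = 0" for v by (simp add: lamdef linv_zero1[OF nd0] linv_zero1[OF nd1])
    then show ?thesis using half Fo by (simp add: in_famQ_def)
  qed
  have last: "lam (e v) (e v) + lam (a0, a1) (e v)
          = of_int ((bil n0 L0 (fst v) (fst v) + dot n0 a0 (fst v))
                    + (- bil n1 L1 (snd v) (snd v) + dot n1 a1 (snd v)))" if vv: "v \<in> vecs n0 \<times> vecs n1" for v
    using lam_ee[OF vv vv] lam_e[OF av0 av1, of v] by simp
  show ?thesis
  proof (intro conjI)
    show "((\<lambda>i. 0), (\<lambda>i. 0)) \<in> H" by (rule H0)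
    show "\<forall>x\<in>H. \<forall>y\<in>H. padd x y \<in> H" using Hadd by blast
    show "\<forall>x\<in>H. pneg x \<in> H" using Hneg by blast
    show "free_fg H" by (rule freeH)
    show "\<forall>x\<in>H. \<forall>y\<in>H. lam x y \<in> \<int>" using lam_int by blast
    show "\<forall>x\<in>H. \<forall>y\<in>H. lam x y = lam y x" using lam_sym by blast
    show "\<forall>x\<in>H. \<forall>y\<in>H. \<forall>z\<in>H. lam (padd x y) z = lam x z + lam y z" using lam_add by blast
    show "\<forall>f :: pvec \<Rightarrow> int. (\<forall>x\<in>H. \<forall>y\<in>H. f (padd x y) = f x + f y)
            \<longrightarrow> (\<exists>!x. x \<in> H \<and> (\<forall>y\<in>H. of_int (f y) = lam x y))" using unimod by blast
    show "\<forall>v\<in>vecs n0 \<times> vecs n1. e v \<in> H" using eH by blast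
    show "inj_on e (vecs n0 \<times> vecs n1)" by (rule einj)
    show "\<forall>v\<in>vecs n0 \<times> vecs n1. \<forall>w\<in>vecs n0 \<times> vecs n1. e (padd v w) = padd (e v) (e w)" using eadd by blast
    show "\<forall>v\<in>vecs n0 \<times> vecs n1. \<forall>w\<in>vecs n0 \<times> vecs n1.
          lam (e v) (e w) = of_int (bil n0 L0 (fst v) (fst w) - bil n1 L1 (snd v) (snd w))" using lam_ee by blast
    show "(a0, a1) \<in> H" by (rule aH)
    show "in_famQ F H lam (\<lambda>v. lam (a0, a1) v)" by (rule famQ)
    show "\<forall>v\<in>vecs n0 \<times> vecs n1.
        lam (e v) (e v) + lam (a0, a1) (e v)
          = of_int ((bil n0 L0 (fst v) (fst v) + dot n0 a0 (fst v))
                    + (- bil n1 L1 (snd v) (snd v) + dot n1 a1 (snd v)))" using last by blast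
  qed
qed

end
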